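(* Let $\mathcal P_X,\mathcal P_Y$ be probability measures on $(E,\mathcal E)$ with $\mathcal P_Y\ll\mathcal P_X$, $L=d\mathcal P_Y/d\mathcal P_X$, and assume $L(\mathbf Z)$ has a continuous distribution under $\mathbf Z\sim\mathcal P_X$. Let $\theta(z)=L(z)/(1+L(z))$. Let $\mathbf Z_X,\mathbf Z_X'\sim\mathcal P_X$ and $\mathbf Z_Y\sim\mathcal P_Y$ be independent, and set $\delta:=\mathbb E|L(\mathbf Z_X)-L(\mathbf Z_X')|$ and $\mu:=\mathbb P(\theta(\mathbf Z_X)<\theta(\mathbf Z_Y))$. Then $\delta=4\mu-2$, i.e. $\mu=\tfrac12+\tfrac{\delta}{4}$.
   Context: $\theta$ is the population conditional probability of label $1$ for a sample drawn with equal weight from $\mathcal P_X$ (label 0) and $\mathcal P_Y$ (label 1); note $\theta/(1-\theta)=L$ and $\theta$ is a strictly increasing function of $L$. *)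

theory Defs
  imports "HOL-Probability.Probability"
begin

definition theta :: "('a \<Rightarrow> real) \<Rightarrow> 'a \<Rightarrow> real" where
  "theta L z = L z / (1 + L z)"

end

theory Submission
  imports Defs
begin

theorem lemma7:
  fixes PX PY :: "'a measure" and L :: "'a \<Rightarrow> real"
  assumes "prob_space PX" and "prob_space PY"
    and "sets PY = sets PX"
    and "absolutely_continuous PX PY"
    and "L \<in> borel_measurable PX"
    and "\<And>z. z \<in> space PX \<Longrightarrow> 0 \<le> L z"
    and "PY = density PX (\<lambda>z. ennreal (L z))"
    and "\<And>r. measure PX {z \<in> space PX. L z = r} = 0"
  shows "(\<integral>p. \<bar>L (fst p) - L (snd p)\<bar> \<partial>(PX \<Otimes>\<^sub>M PX))
         = 4 * measure (PX \<Otimes>\<^sub>M PY) {p \<in> space (PX \<Otimes>\<^sub>M PY). theta L (fst p) < theta L (snd p)} - 2"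
proof -
  interpret X: prob_space PX by fact
  interpret Y: prob_space PY by fact
  interpret Q: pair_prob_space PX PX by unfold_locales
  note Lm[measurable] = assms(5)
  note nn = assms(6)
  define Q where "Q = PX \<Otimes>\<^sub>M PX"
  have spQ: "space Q = space PX \<times> space PX" by (simp add: Q_def space_pair_measure)
  have spY: "space PY = space PX" using assms(3) by (rule sets_eq_imp_space_eq)
  have L1: "(\<integral>\<^sup>+ z. ennreal (L z) \<partial>PX) = 1"
  proof -
    have "1 = emeasure PY (space PY)" by (simp add: Y.emeasure_space_1)
    also have "\<dots> = (\<integral>\<^sup>+ z. ennreal (L z) * indicator (space PX) z \<partial>PX)"
      unfolding assms(7) by (subst emeasure_density) auto
    also have "\<dots> = (\<integral>\<^sup>+ z. ennreal (L z) \<partial>PX)"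
      by (intro nn_integral_cong) auto
    finally show ?thesis by simp
  qed
  have intb: "integrable Q (\<lambda>p. L (snd p))"
  proof (rule integrableI_nonneg)
    show "AE x in Q. 0 \<le> L (snd x)" by (intro AE_I2) (auto simp: spQ nn)
    have "(\<integral>\<^sup>+ p. ennreal (L (snd p)) \<partial>Q) = (\<integral>\<^sup>+ x. \<integral>\<^sup>+ y. ennreal (L y) \<partial>PX \<partial>PX)"
      unfolding Q_def by (subst X.nn_integral_fst[symmetric]) auto
    also have "\<dots> = 1" by (simp add: L1 X.emeasure_space_1)
    finally show "(\<integral>\<^sup>+ p. ennreal (L (snd p)) \<partial>Q) < \<infinity>" by simp
  qed (simp add: Q_def)
  have inta: "integrable Q (\<lambda>p. L (fst p))"
  proof (rule integrableI_nonneg)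
    show "AE x in Q. 0 \<le> L (fst x)" by (intro AE_I2) (auto simp: spQ nn)
    have "(\<integral>\<^sup>+ p. ennreal (L (fst p)) \<partial>Q) = (\<integral>\<^sup>+ x. \<integral>\<^sup>+ y. ennreal (L x) \<partial>PX \<partial>PX)"
      unfolding Q_def by (subst X.nn_integral_fst[symmetric]) auto
    also have "\<dots> = 1" by (simp add: L1 X.emeasure_space_1)
    finally show "(\<integral>\<^sup>+ p. ennreal (L (fst p)) \<partial>Q) < \<infinity>" by simp
  qed (simp add: Q_def)
  have intb1: "(\<integral>p. L (snd p) \<partial>Q) = 1"
  proof -
    have "(\<integral>\<^sup>+ p. ennreal (L (snd p)) \<partial>Q) = (\<integral>\<^sup>+ x. \<integral>\<^sup>+ y. ennreal (L y) \<partial>PX \<partial>PX)"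
      unfolding Q_def by (subst X.nn_integral_fst[symmetric]) auto
    also have "\<dots> = 1" by (simp add: L1 X.emeasure_space_1)
    finally have e1: "(\<integral>\<^sup>+ p. ennreal (L (snd p)) \<partial>Q) = 1" .
    have ae: "AE x in Q. 0 \<le> L (snd x)" by (intro AE_I2) (auto simp: spQ nn)
    have "ennreal (\<integral>p. L (snd p) \<partial>Q) = 1"
      using nn_integral_eq_integral[OF intb ae] e1 by simp
    moreover have "0 \<le> (\<integral>p. L (snd p) \<partial>Q)" using ae by (rule integral_nonneg_AE)
    ultimately show ?thesis by (metis ennreal_1 ennreal_inj zero_le_one)
  qed
  define A where "A = {p \<in> space Q. L (fst p) < L (snd p)}"
  define B where "B = {p \<in> space Q. L (snd p) < L (fst p)}"
  define E where "E = {p \<in> space Q. L (fst p) = L (snd p)}"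
  have ABE[measurable]: "A \<in> sets Q" "B \<in> sets Q" "E \<in> sets Q"
    unfolding A_def B_def E_def Q_def by measurable
  note ABE'[measurable] = ABE[unfolded Q_def]
  have "emeasure Q E = (\<integral>\<^sup>+x. emeasure PX (Pair x -` E) \<partial>PX)"
    using ABE(3) unfolding Q_def by (rule X.emeasure_pair_measure_alt)
  also have "\<dots> = (\<integral>\<^sup>+x. 0 \<partial>PX)"
  proof (intro nn_integral_cong)
    fix x assume x: "x \<in> space PX"
    have "Pair x -` E = {z \<in> space PX. L z = L x}" using x by (auto simp: E_def spQ)
    then show "emeasure PX (Pair x -` E) = 0"
      using assms(8) by (simp add: X.emeasure_eq_measure)
  qed
  finally have "emeasure Q E = 0" by simp
  then have AEne: "AE p in Q. L (fst p) \<noteq> L (snd p)"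
    using ABE(3) by (intro AE_I'[of E]) (auto simp: null_sets_def, auto simp: E_def)
  define iA where "iA = (\<lambda>p. indicator A p :: real)"
  define iB where "iB = (\<lambda>p. indicator B p :: real)"
  have iAi: "integrable Q (\<lambda>p. L (fst p) * iA p)" "integrable Q (\<lambda>p. L (snd p) * iA p)"
    "integrable Q (\<lambda>p. L (fst p) * iB p)" "integrable Q (\<lambda>p. L (snd p) * iB p)"
    unfolding iA_def iB_def by (auto intro!: integrable_real_mult_indicator inta intb)
  have "(\<integral>p. \<bar>L (fst p) - L (snd p)\<bar> \<partial>Q) =
     (\<integral>p. (L (snd p) * iA p - L (fst p) * iA p) + (L (fst p) * iB p - L (snd p) * iB p) \<partial>Q)"
    by (rule Bochner_Integration.integral_cong[OF refl]) (auto simp: iA_def iB_def A_def B_def indicator_def)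
  also have "\<dots> = ((\<integral>p. L (snd p) * iA p \<partial>Q) - (\<integral>p. L (fst p) * iA p \<partial>Q))
      + ((\<integral>p. L (fst p) * iB p \<partial>Q) - (\<integral>p. L (snd p) * iB p \<partial>Q))"
    using iAi by simp
  finally have D: "(\<integral>p. \<bar>L (fst p) - L (snd p)\<bar> \<partial>Q) = ((\<integral>p. L (snd p) * iA p \<partial>Q) - (\<integral>p. L (fst p) * iA p \<partial>Q))
      + ((\<integral>p. L (fst p) * iB p \<partial>Q) - (\<integral>p. L (snd p) * iB p \<partial>Q))" .
  have sw1: "(\<integral>p. L (fst p) * iB p \<partial>Q) = (\<integral>p. L (snd p) * iA p \<partial>Q)"
  proof -
    have "(\<integral>(x,y). (\<lambda>p. L (fst p) * iB p) (y,x) \<partial>Q) = (\<integral>p. L (fst p) * iB p \<partial>Q)"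
      unfolding Q_def by (rule Q.integral_product_swap) (unfold iB_def, measurable)
    moreover have "(\<lambda>(x,y). (\<lambda>p. L (fst p) * iB p) (y,x)) = (\<lambda>p. L (snd p) * iA p)"
      by (auto simp: iA_def iB_def A_def B_def indicator_def spQ fun_eq_iff)
    ultimately show ?thesis by simp
  qed
  have sw2: "(\<integral>p. L (snd p) * iB p \<partial>Q) = (\<integral>p. L (fst p) * iA p \<partial>Q)"
  proof -
    have "(\<integral>(x,y). (\<lambda>p. L (snd p) * iB p) (y,x) \<partial>Q) = (\<integral>p. L (snd p) * iB p \<partial>Q)"
      unfolding Q_def by (rule Q.integral_product_swap) (unfold iB_def, measurable)
    moreover have "(\<lambda>(x,y). (\<lambda>p. L (snd p) * iB p) (y,x)) = (\<lambda>p. L (fst p) * iA p)"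
      by (auto simp: iA_def iB_def A_def B_def indicator_def spQ fun_eq_iff)
    ultimately show ?thesis by simp
  qed
  have S: "(\<integral>p. L (snd p) * iA p \<partial>Q) + (\<integral>p. L (snd p) * iB p \<partial>Q) = 1"
  proof -
    have "(\<integral>p. L (snd p) * iA p \<partial>Q) + (\<integral>p. L (snd p) * iB p \<partial>Q)
        = (\<integral>p. L (snd p) * iA p + L (snd p) * iB p \<partial>Q)" using iAi by simp
    also have "\<dots> = (\<integral>p. L (snd p) \<partial>Q)"
    proof (rule integral_cong_AE)
      show "(\<lambda>p. L (snd p) * iA p + L (snd p) * iB p) \<in> borel_measurable Q"
        unfolding Q_def iA_def iB_def by measurable
      show "(\<lambda>p. L (snd p)) \<in> borel_measurable Q" unfolding Q_def by measurable
      show "AE p in Q. L (snd p) * iA p + L (snd p) * iB p = L (snd p)"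
        using AEne AE_space by eventually_elim (auto simp: iA_def iB_def A_def B_def indicator_def)
    qed
    finally show ?thesis using intb1 by simp
  qed
  have lhs: "(\<integral>p. \<bar>L (fst p) - L (snd p)\<bar> \<partial>Q) = 4 * (\<integral>p. L (snd p) * iA p \<partial>Q) - 2"
    using D sw1 sw2 S by simp
  have PXY: "PX \<Otimes>\<^sub>M PY = density Q (\<lambda>(x,y). 1 * ennreal (L y))"
  proof -
    have "PX \<Otimes>\<^sub>M PY = density PX (\<lambda>_. 1) \<Otimes>\<^sub>M density PX (\<lambda>z. ennreal (L z))"
      by (simp add: density_1 assms(7))
    also have "\<dots> = density Q (\<lambda>(x,y). 1 * ennreal (L y))"
      unfolding Q_def
      by (rule pair_measure_density) (auto simp: assms(7)[symmetric] intro: X.sigma_finite_measure_axioms Y.sigma_finite_measure_axioms)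
    finally show ?thesis .
  qed
  have setEq: "{p \<in> space (PX \<Otimes>\<^sub>M PY). theta L (fst p) < theta L (snd p)} = A"
  proof -
    have key: "(a / (1 + a) < b / (1 + b)) = (a < b)" if "0 \<le> a" "0 \<le> b" for a b :: real
    proof -
      have "(a / (1 + a) < b / (1 + b)) = (a * (1 + b) < b * (1 + a))"
        using that by (simp add: divide_less_eq less_divide_eq field_simps add_pos_nonneg)
      then show ?thesis by (simp add: algebra_simps)
    qed
    then show ?thesis
      by (auto simp: A_def theta_def space_pair_measure spY spQ nn key)
  qed
  have "emeasure (PX \<Otimes>\<^sub>M PY) A = (\<integral>\<^sup>+ p. (\<lambda>(x,y). 1 * ennreal (L y)) p * indicator A p \<partial>Q)"
    unfolding PXY by (rule emeasure_density) (unfold Q_def, measurable)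
  also have "\<dots> = (\<integral>\<^sup>+ p. ennreal (L (snd p) * iA p) \<partial>Q)"
    by (intro nn_integral_cong) (auto simp: iA_def indicator_def spQ nn)
  also have "\<dots> = ennreal (\<integral>p. L (snd p) * iA p \<partial>Q)"
    by (rule nn_integral_eq_integral[OF iAi(2)]) (auto simp: iA_def indicator_def spQ nn intro!: AE_I2)
  finally have em: "emeasure (PX \<Otimes>\<^sub>M PY) A = ennreal (\<integral>p. L (snd p) * iA p \<partial>Q)" .
  have nnI: "0 \<le> (\<integral>p. L (snd p) * iA p \<partial>Q)"
    by (rule integral_nonneg_AE) (use AE_space in eventually_elim, auto simp: iA_def indicator_def spQ nn)
  have "measure (PX \<Otimes>\<^sub>M PY) A = (\<integral>p. L (snd p) * iA p \<partial>Q)"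
    unfolding measure_def em using nnI by simp
  then show ?thesis using lhs setEq by (simp add: Q_def)
qed

end
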